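(* Let $m,n\ge r\ge1$ and let $A\in\mathbb{R}^{m\times r}$, $B\in\mathbb{R}^{n\times r}$ be arbitrary. Then $$\left|\|AB^\top\|_*-\|A\|_F^2\right|\le\sqrt{\|A^\top A-B^\top B\|_*}\;\|A\|_*,$$ and in particular $$\left|\|AB^\top\|_*-\frac{\|A\|_F^2+\|B\|_F^2}{2}\right|\le\sqrt{\|A^\top A-B^\top B\|_*}\;\frac{\|A\|_*+\|B\|_*}{2}.$$
   Context: $\|\cdot\|_F$ is the Frobenius norm and $\|X\|_*=\operatorname{Tr}(\sqrt{XX^\top})$ the nuclear norm (sum of singular values). *)

theory Defs
  imports "HOL-Analysis.Analysis"
begin

definition psd_matrix :: "real^'n^'n \<Rightarrow> bool" where
  "psd_matrix S \<longleftrightarrow> transpose S = S \<and> (\<forall>x. 0 \<le> x \<bullet> (S *v x))"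

definition psd_sqrt :: "real^'n^'n \<Rightarrow> real^'n^'n" where
  "psd_sqrt M = (THE S. psd_matrix S \<and> S ** S = M)"

definition nuclear_norm :: "real^'c^'m \<Rightarrow> real" where
  "nuclear_norm X = trace (psd_sqrt (X ** transpose X))"

definition frob_norm :: "real^'c^'m \<Rightarrow> real" where
  "frob_norm X = sqrt (\<Sum>i\<in>UNIV. \<Sum>j\<in>UNIV. (X $ i $ j)\<^sup>2)"

end

theory Submission
  imports Defs
begin

lemma inner_mv: "(x::real^'n) \<bullet> (A *v y) = (transpose A *v x) \<bullet> y"
  by (simp add: dot_lmul_matrix)

lemma inner_sym: "transpose A = A \<Longrightarrow> (x::real^'n) \<bullet> (A *v y) = (A *v x) \<bullet> y"
  by (metis inner_mv)

lemma spectral_aux: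
  fixes M :: "real^'n^'n"
  assumes sym: "transpose M = M"
  shows "subspace S \<Longrightarrow> (\<forall>x\<in>S. M *v x \<in> S) \<Longrightarrow> \<exists>B. B \<subseteq> S \<and> pairwise orthogonal B \<and>
     (\<forall>v\<in>B. norm v = 1 \<and> M *v v = (v \<bullet> (M *v v)) *\<^sub>R v) \<and> span B = S"
proof (induction "dim S" arbitrary: S rule: less_induct)
  case less
  show ?case
  proof (cases "S = {0}")
    case True then show ?thesis by (intro exI[of _ "{}"]) auto
  next
    case False
    then obtain a where a: "a \<in> S" "a \<noteq> 0" using less.prems(1) subspace_0 by blast
    let ?T = "S \<inter> sphere 0 1"
    have cT: "compact ?T"
      using closed_subspace[OF less.prems(1)] by (simp add: closed_Int_compact)
    have "a /\<^sub>R norm a \<in> ?T" using a less.prems(1) by (simp add: subspace_scale)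
    then have neT: "?T \<noteq> {}" by blast
    have cont: "continuous_on ?T (\<lambda>x. x \<bullet> (M *v x))"
      by (intro continuous_intros linear_continuous_on linear_conv_bounded_linear[THEN iffD1]) simp
    obtain x where x: "x \<in> ?T" "\<And>y. y \<in> ?T \<Longrightarrow> y \<bullet> (M *v y) \<le> x \<bullet> (M *v x)"
      using continuous_attains_sup[OF cT neT cont] by blast
    have xS: "x \<in> S" and nx: "norm x = 1" using x(1) by auto
    have xx: "x \<bullet> x = 1" using nx by (simp add: norm_eq_1)
    define l where "l = x \<bullet> (M *v x)"
    have eig: "M *v x = l *\<^sub>R x"
    proof (rule ccontr)
      define z where "z = M *v x - l *\<^sub>R x"
      assume "M *v x \<noteq> l *\<^sub>R x"
      then have zz: "z \<bullet> z > 0" unfolding z_def by simp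
      have zS: "z \<in> S" unfolding z_def
        using less.prems xS by (simp add: subspace_diff subspace_scale)
      have zx: "x \<bullet> z = 0" unfolding z_def l_def using xx
        by (simp add: inner_diff_right)
      have zMx: "x \<bullet> (M *v z) = z \<bullet> z"
      proof -
        have "x \<bullet> (M *v z) = (M *v x) \<bullet> z" by (rule inner_sym[OF sym])
        also have "\<dots> = (z + l *\<^sub>R x) \<bullet> z" unfolding z_def by simp
        also have "\<dots> = z \<bullet> z" using zx by (simp add: inner_add_left)
        finally show ?thesis .
      qed
      have zMx2: "z \<bullet> (M *v x) = z \<bullet> z"
        using zMx inner_sym[OF sym, of z x] by (simp add: inner_commute)
      define C where "C = l * (z \<bullet> z) - z \<bullet> (M *v z)"
      define t where "t = (z \<bullet> z) / (\<bar>C\<bar> + 1)"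
      have tpos: "t > 0" unfolding t_def using zz by simp
      define y where "y = x + t *\<^sub>R z"
      have yy: "y \<bullet> y = 1 + t^2 * (z \<bullet> z)" unfolding y_def
        using xx zx by (simp add: inner_add_left inner_add_right inner_commute power2_eq_square)
      have fy: "y \<bullet> (M *v y) = l + 2 * t * (z \<bullet> z) + t^2 * (z \<bullet> (M *v z))"
        unfolding y_def using zMx zMx2
        by (simp add: inner_add_left inner_add_right matrix_vector_right_distrib
            matrix_vector_mult_scaleR l_def power2_eq_square algebra_simps)
      have ypos: "y \<bullet> y > 0" using yy zz tpos by (simp add: add_pos_nonneg)
      then have ny: "norm y > 0" by (simp add: zero_less_norm_iff)
      define y' where "y' = y /\<^sub>R norm y"
      have "y \<in> S" unfolding y_def using xS zS less.prems by (simp add: subspace_add subspace_scale)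
      then have "y' \<in> ?T" unfolding y'_def using ny less.prems by (simp add: subspace_scale)
      then have "y' \<bullet> (M *v y') \<le> l" using x(2) l_def by blast
      moreover have "y' \<bullet> (M *v y') = (y \<bullet> (M *v y)) / (y \<bullet> y)"
        unfolding y'_def using ny by (simp add: matrix_vector_mult_scaleR power2_norm_eq_inner[symmetric] power2_eq_square field_simps)
      ultimately have "y \<bullet> (M *v y) \<le> l * (y \<bullet> y)" using ypos by (simp add: divide_le_eq)
      then have "2 * t * (z \<bullet> z) \<le> t^2 * C" unfolding fy yy C_def by (simp add: algebra_simps)
      then have "2 * (z \<bullet> z) \<le> t * C" using tpos by (simp add: power2_eq_square)
      also have "\<dots> \<le> t * \<bar>C\<bar>" using tpos by (simp add: mult_left_mono)
      also have "\<dots> < z \<bullet> z"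
      proof -
        have "t * \<bar>C\<bar> = (z \<bullet> z) * (\<bar>C\<bar> / (\<bar>C\<bar> + 1))" unfolding t_def by simp
        also have "\<dots> < (z \<bullet> z) * 1" using zz by (intro mult_strict_left_mono) auto
        finally show ?thesis by simp
      qed
      finally show False using zz by simp
    qed
    define S' where "S' = S \<inter> {y. x \<bullet> y = 0}"
    have sub': "subspace S'" unfolding S'_def using less.prems(1)
      by (auto simp: subspace_def inner_add_right)
    have inv': "\<forall>y\<in>S'. M *v y \<in> S'"
    proof
      fix y assume "y \<in> S'"
      then have "y \<in> S" "x \<bullet> y = 0" unfolding S'_def by auto
      moreover have "x \<bullet> (M *v y) = (M *v x) \<bullet> y" by (rule inner_sym[OF sym])
      ultimately show "M *v y \<in> S'" unfolding S'_def using less.prems(2) eig by auto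
    qed
    have xS': "x \<notin> S'" using xx unfolding S'_def by auto
    have "S' \<subset> S" using xS xS' unfolding S'_def by blast
    then have "dim S' < dim S" using sub' less.prems(1) by (intro dim_psubset) (metis span_eq_iff)
    from less.hyps[OF this sub' inv'] obtain B' where B': "B' \<subseteq> S'" "pairwise orthogonal B'"
      "\<forall>v\<in>B'. norm v = 1 \<and> M *v v = (v \<bullet> (M *v v)) *\<^sub>R v" "span B' = S'" by blast
    have orth: "\<forall>y\<in>B'. x \<bullet> y = 0" using B'(1) unfolding S'_def by auto
    show ?thesis
    proof (intro exI[of _ "insert x B'"] conjI)
      show "insert x B' \<subseteq> S" using B'(1) xS unfolding S'_def by auto
      show "pairwise orthogonal (insert x B')" using B'(2) orth
        by (auto simp: pairwise_insert orthogonal_def inner_commute)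
      show "\<forall>v\<in>insert x B'. norm v = 1 \<and> M *v v = (v \<bullet> (M *v v)) *\<^sub>R v"
        using B'(3) nx eig xx by (auto simp: l_def)
      show "span (insert x B') = S"
      proof
        show "span (insert x B') \<subseteq> S"
          using B'(1) xS less.prems(1) unfolding S'_def by (intro span_minimal) auto
        show "S \<subseteq> span (insert x B')"
        proof
          fix y assume yS: "y \<in> S"
          have "y - (x \<bullet> y) *\<^sub>R x \<in> S'" unfolding S'_def using yS xS less.prems(1) xx
            by (simp add: subspace_diff subspace_scale inner_diff_right)
          then have "y - (x \<bullet> y) *\<^sub>R x \<in> span (insert x B')" using B'(4)
            by (metis span_mono subset_insertI subsetD)
          moreover have "(x \<bullet> y) *\<^sub>R x \<in> span (insert x B')" by (simp add: span_base span_scale)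
          ultimately have "(y - (x \<bullet> y) *\<^sub>R x) + (x \<bullet> y) *\<^sub>R x \<in> span (insert x B')"
            by (rule span_add)
          then show "y \<in> span (insert x B')" by simp
        qed
      qed
    qed
  qed
qed


definition onb :: "real^'n^'n \<Rightarrow> (real^'n) set \<Rightarrow> bool" where
  "onb M B \<longleftrightarrow> finite B \<and> (\<forall>v\<in>B. \<forall>w\<in>B. v \<bullet> w = (if v = w then 1 else 0)) \<and>
     (\<forall>v\<in>B. M *v v = (v \<bullet> (M *v v)) *\<^sub>R v) \<and> (\<forall>y. y = (\<Sum>v\<in>B. (v \<bullet> y) *\<^sub>R v))"

lemma onb_fin: "onb M B \<Longrightarrow> finite B" unfolding onb_def by (elim conjE)
lemma onb_on: "onb M B \<Longrightarrow> v \<in> B \<Longrightarrow> w \<in> B \<Longrightarrow> v \<bullet> w = (if v = w then 1 else 0)"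
  unfolding onb_def by (elim conjE) (drule bspec, assumption, erule bspec)
lemma onb_eig: "onb M B \<Longrightarrow> v \<in> B \<Longrightarrow> M *v v = (v \<bullet> (M *v v)) *\<^sub>R v"
  unfolding onb_def by (elim conjE) (erule bspec)
lemma onb_exp: "onb M B \<Longrightarrow> y = (\<Sum>v\<in>B. (v \<bullet> y) *\<^sub>R v)"
  unfolding onb_def by (elim conjE) (erule allE, assumption)

lemma spectral:
  fixes M :: "real^'n^'n"
  assumes msym: "transpose M = M"
  shows "\<exists>B. onb M B"
proof -
  obtain B where B: "pairwise orthogonal B" "\<forall>v\<in>B. norm v = 1 \<and> M *v v = (v \<bullet> (M *v v)) *\<^sub>R v"
    "span B = UNIV"
    using spectral_aux[OF msym subspace_UNIV] by auto
  have "0 \<notin> B" using B(2) by force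
  then have "independent B" using B(1) pairwise_orthogonal_independent by blast
  then have fin: "finite B" using independent_imp_finite by blast
  have on: "\<forall>v\<in>B. \<forall>w\<in>B. v \<bullet> w = (if v = w then 1 else 0)"
    using B(1,2) by (auto simp: pairwise_def orthogonal_def norm_eq_1)
  have exp: "y = (\<Sum>v\<in>B. (v \<bullet> y) *\<^sub>R v)" for y
  proof -
    have "y \<in> span B" using B(3) by simp
    then have "y \<in> range (\<lambda>u. \<Sum>v\<in>B. u v *\<^sub>R v)" by (simp only: span_finite[OF fin])
    then obtain u where u0: "y = (\<Sum>v\<in>B. u v *\<^sub>R v)" by (rule rangeE)
    then have u: "(\<Sum>v\<in>B. u v *\<^sub>R v) = y" by (rule sym)
    have "w \<bullet> y = u w" if "w \<in> B" for w
    proof -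
      have "w \<bullet> y = (\<Sum>v\<in>B. u v * (w \<bullet> v))" unfolding u[symmetric]
        by (simp add: inner_sum_right)
      also have "\<dots> = (\<Sum>v\<in>B. if v = w then u w else 0)"
        using on that by (intro sum.cong) auto
      also have "\<dots> = u w" using fin that by simp
      finally show ?thesis .
    qed
    then have "(\<Sum>v\<in>B. (v \<bullet> y) *\<^sub>R v) = (\<Sum>v\<in>B. u v *\<^sub>R v)" by (intro sum.cong) auto
    then show ?thesis using u by simp
  qed
  show ?thesis unfolding onb_def
  proof (intro exI[of _ B] conjI allI)
    show "finite B" by (rule fin)
    show "\<forall>v\<in>B. \<forall>w\<in>B. v \<bullet> w = (if v = w then 1 else 0)" by (rule on)
    show "\<forall>v\<in>B. M *v v = (v \<bullet> (M *v v)) *\<^sub>R v" using B(2) by blast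
    show "y = (\<Sum>v\<in>B. (v \<bullet> y) *\<^sub>R v)" for y by (rule exp)
  qed
qed

lemma onb_inner: "onb M B \<Longrightarrow> x \<bullet> y = (\<Sum>v\<in>B. (v \<bullet> x) * (v \<bullet> y))"
proof -
  assume o: "onb M B"
  then have "y = (\<Sum>v\<in>B. (v \<bullet> y) *\<^sub>R v)" unfolding onb_def by blast
  then have "x \<bullet> y = x \<bullet> (\<Sum>v\<in>B. (v \<bullet> y) *\<^sub>R v)" by simp
  also have "\<dots> = (\<Sum>v\<in>B. (v \<bullet> x) * (v \<bullet> y))"
    by (simp add: inner_sum_right inner_commute mult.commute)
  finally show ?thesis .
qed

lemma onb_comp: "onb M B \<Longrightarrow> (\<Sum>v\<in>B. v$i * v$j) = (if i = j then 1 else 0)"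
proof -
  assume o: "onb M B"
  have 1: "axis i 1 \<bullet> axis j (1::real) = (if i = j then 1 else 0)" by (simp only: inner_axis_axis) simp
  have 2: "v \<bullet> axis k 1 = v $ k" for v :: "real^'a" and k by (simp only: inner_axis) simp
  have 3: "(\<Sum>v\<in>B. (v \<bullet> axis i 1) * (v \<bullet> axis j 1)) = (\<Sum>v\<in>B. v$i * v$j)"
    by (simp only: 2)
  show ?thesis using onb_inner[OF o, of "axis i 1" "axis j 1"] unfolding 1 3 by simp
qed

lemma onb_trace:
  fixes S :: "real^'n^'n"
  assumes o: "onb M B"
  shows "trace S = (\<Sum>v\<in>B. v \<bullet> (S *v v))"
proof -
  have "(\<Sum>v\<in>B. v \<bullet> (S *v v)) = (\<Sum>v\<in>B. \<Sum>i\<in>UNIV. \<Sum>j\<in>UNIV. S$i$j * (v$i * v$j))"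
    by (simp add: inner_vec_def matrix_vector_mult_def sum_distrib_left algebra_simps)
  also have "\<dots> = (\<Sum>i\<in>UNIV. \<Sum>j\<in>UNIV. \<Sum>v\<in>B. S$i$j * (v$i * v$j))"
    by (subst sum.swap) (simp add: sum.swap[of _ B])
  also have "\<dots> = (\<Sum>i\<in>UNIV. \<Sum>j\<in>UNIV. S$i$j * (if i = j then 1 else 0))"
    by (simp add: sum_distrib_left[symmetric] onb_comp[OF o])
  also have "\<dots> = (\<Sum>i\<in>UNIV. \<Sum>j\<in>UNIV. if j = i then S$i$i else 0)"
    by (intro sum.cong refl) auto
  also have "\<dots> = trace S" by (simp add: trace_def)
  finally show ?thesis by (rule sym)
qed

lemma onb_apply: "onb M B \<Longrightarrow> A *v x = (\<Sum>v\<in>B. (v \<bullet> x) *\<^sub>R (A *v v))"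
proof -
  assume o: "onb M B"
  then have "x = (\<Sum>v\<in>B. (v \<bullet> x) *\<^sub>R v)" unfolding onb_def by blast
  then have "A *v x = A *v (\<Sum>v\<in>B. (v \<bullet> x) *\<^sub>R v)" by simp
  also have "\<dots> = (\<Sum>v\<in>B. (v \<bullet> x) *\<^sub>R (A *v v))"
    by (simp add: linear_sum[OF matrix_vector_mul_linear] o_def linear_cmul[OF matrix_vector_mul_linear])
  finally show ?thesis .
qed

lemma onb_matrix_eq: "onb M B \<Longrightarrow> (\<And>v. v \<in> B \<Longrightarrow> A *v v = C *v v) \<Longrightarrow> A = C"
  by (subst matrix_eq) (metis (no_types, lifting) onb_apply sum.cong)

definition osum :: "'a set \<Rightarrow> ('a \<Rightarrow> real^'m) \<Rightarrow> ('a \<Rightarrow> real^'n) \<Rightarrow> real^'n^'m" where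
  "osum B g h = (\<chi> i j. \<Sum>v\<in>B. g v $ i * h v $ j)"

lemma osum_mult: "osum B g h *v y = (\<Sum>v\<in>B. (h v \<bullet> y) *\<^sub>R g v)"
  by (simp add: vec_eq_iff osum_def matrix_vector_mult_def inner_vec_def sum_component
      sum_distrib_left sum_distrib_right algebra_simps sum.swap[of _ B])

lemma osum_transpose: "transpose (osum B g g) = osum B g g"
  by (simp add: vec_eq_iff osum_def transpose_def mult.commute)

lemma osum_basis: "onb M B \<Longrightarrow> w \<in> B \<Longrightarrow> osum B (\<lambda>v. f v *\<^sub>R v) (\<lambda>v. v) *v w = f w *\<^sub>R w"
proof -
  assume o: "onb M B" and w: "w \<in> B"
  have "osum B (\<lambda>v. f v *\<^sub>R v) (\<lambda>v. v) *v w = (\<Sum>v\<in>B. (v \<bullet> w) *\<^sub>R f v *\<^sub>R v)"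
    by (simp add: osum_mult)
  also have "\<dots> = (\<Sum>v\<in>B. if v = w then f w *\<^sub>R w else 0)"
  proof (intro sum.cong refl)
    fix v assume v: "v \<in> B"
    show "(v \<bullet> w) *\<^sub>R f v *\<^sub>R v = (if v = w then f w *\<^sub>R w else 0)"
      using onb_on[OF o v w] by (cases "v = w") auto
  qed
  also have "\<dots> = f w *\<^sub>R w" using onb_fin[OF o] w by simp
  finally show ?thesis .
qed


lemma psd_eig_nonneg: "psd_matrix M \<Longrightarrow> 0 \<le> v \<bullet> (M *v v)"
  unfolding psd_matrix_def by blast

lemma psd_sym: "psd_matrix M \<Longrightarrow> transpose M = M"
  unfolding psd_matrix_def by blast

lemma psd_gram: "psd_matrix (X ** transpose X)"
  unfolding psd_matrix_def
proof (intro conjI allI)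
  show "transpose (X ** transpose X) = X ** transpose X"
    by (simp add: matrix_transpose_mul)
  fix x :: "real^'a"
  have "x \<bullet> ((X ** transpose X) *v x) = (transpose X *v x) \<bullet> (transpose X *v x)"
    by (simp only: matrix_vector_mul_assoc[symmetric] inner_mv[of x X])
  then show "0 \<le> x \<bullet> ((X ** transpose X) *v x)" by simp
qed

lemma psd_sqrt_ex:
  fixes M :: "real^'n^'n"
  assumes p: "psd_matrix M"
  shows "\<exists>S. psd_matrix S \<and> S ** S = M"
proof -
  obtain B where o: "onb M B" using spectral psd_sym[OF p] by blast
  define lam where "lam v = v \<bullet> (M *v v)" for v
  have lam0: "lam v \<ge> 0" for v unfolding lam_def using psd_eig_nonneg[OF p] .
  define S where "S = osum B (\<lambda>v. sqrt (lam v) *\<^sub>R v) (\<lambda>v. v)"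
  have Sv: "S *v v = sqrt (lam v) *\<^sub>R v" if "v \<in> B" for v
    unfolding S_def using osum_basis[OF o that] .
  have Ssym: "transpose S = S"
    unfolding S_def osum_def by (simp add: vec_eq_iff transpose_def ac_simps)
  have Spos: "0 \<le> x \<bullet> (S *v x)" for x
  proof -
    have "x \<bullet> (S *v x) = (\<Sum>v\<in>B. sqrt (lam v) * (v \<bullet> x)^2)"
      unfolding S_def osum_mult by (simp add: inner_sum_right inner_commute power2_eq_square mult.assoc mult.left_commute)
    also have "\<dots> \<ge> 0" using lam0 by (intro sum_nonneg) simp
    finally show ?thesis .
  qed
  have "S ** S = M"
  proof (rule onb_matrix_eq[OF o])
    fix v assume v: "v \<in> B"
    have "(S ** S) *v v = S *v (S *v v)" by (simp add: matrix_vector_mul_assoc)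
    also have "\<dots> = lam v *\<^sub>R v" using lam0[of v] by (simp add: Sv[OF v] matrix_vector_mult_scaleR)
    also have "\<dots> = M *v v" using onb_eig[OF o v] unfolding lam_def by simp
    finally show "(S ** S) *v v = M *v v" .
  qed
  then show ?thesis using Ssym Spos unfolding psd_matrix_def by blast
qed

lemma psd_sqrt_uniq:
  fixes S T :: "real^'n^'n"
  assumes pS: "psd_matrix S" and pT: "psd_matrix T" and eq: "S ** S = T ** T"
  shows "S = T"
proof -
  obtain B where o: "onb S B" using spectral psd_sym[OF pS] by blast
  show ?thesis
  proof (rule onb_matrix_eq[OF o])
    fix v assume v: "v \<in> B"
    define s where "s = v \<bullet> (S *v v)"
    have s0: "s \<ge> 0" unfolding s_def using psd_eig_nonneg[OF pS] .
    have Sv: "S *v v = s *\<^sub>R v" unfolding s_def using onb_eig[OF o v] .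
    have TT: "T *v (T *v v) = (s * s) *\<^sub>R v"
    proof -
      have "T *v (T *v v) = (S ** S) *v v" by (simp add: eq matrix_vector_mul_assoc)
      also have "\<dots> = (s * s) *\<^sub>R v" by (simp add: matrix_vector_mul_assoc[symmetric] Sv matrix_vector_mult_scaleR)
      finally show ?thesis .
    qed
    have "T *v v = s *\<^sub>R v"
    proof (cases "s = 0")
      case True
      have "(T *v v) \<bullet> (T *v v) = v \<bullet> (T *v (T *v v))"
        using inner_sym[OF psd_sym[OF pT], of v "T *v v"] by simp
      also have "\<dots> = 0" using TT True by simp
      finally show ?thesis using True by simp
    next
      case False
      define w where "w = T *v v - s *\<^sub>R v"
      have Tw: "T *v w = - s *\<^sub>R w"
        unfolding w_def using TT by (simp add: matrix_vector_mult_diff_distrib matrix_vector_mult_scaleR algebra_simps)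
      have "0 \<le> w \<bullet> (T *v w)" using psd_eig_nonneg[OF pT] .
      then have "s * (w \<bullet> w) \<le> 0" unfolding Tw by simp
      then have "w \<bullet> w \<le> 0" using s0 False by (simp add: mult_le_0_iff)
      then have "w = 0" by (metis inner_ge_zero inner_eq_zero_iff order_antisym)
      then show ?thesis unfolding w_def by simp
    qed
    then show "S *v v = T *v v" using Sv by simp
  qed
qed

lemma psd_sqrt_prop:
  assumes "psd_matrix M"
  shows "psd_matrix (psd_sqrt M) \<and> psd_sqrt M ** psd_sqrt M = M"
proof -
  have "\<exists>!S. psd_matrix S \<and> S ** S = M"
    using psd_sqrt_ex[OF assms] psd_sqrt_uniq by metis
  then show ?thesis unfolding psd_sqrt_def by (rule theI')
qed

lemma psd_sqrt_eq:
  assumes "psd_matrix S" "S ** S = M"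
  shows "psd_sqrt M = S"
proof -
  have "M = S ** transpose S" using assms psd_sym by metis
  then have "psd_matrix M" using psd_gram by metis
  show ?thesis using psd_sqrt_prop[OF \<open>psd_matrix M\<close>] psd_sqrt_uniq assms by metis
qed


declare transpose_matrix_vector[simp del]

lemma nuc_basis:
  fixes X :: "real^'c^'m"
  obtains S B where "psd_matrix S" "S ** S = X ** transpose X" "onb S B"
    "nuclear_norm X = (\<Sum>v\<in>B. v \<bullet> (S *v v))"
    "\<And>v. v \<in> B \<Longrightarrow> norm (transpose X *v v) = v \<bullet> (S *v v)"
    "\<And>v. v \<in> B \<Longrightarrow> 0 \<le> v \<bullet> (S *v v)"
    "\<And>v. v \<in> B \<Longrightarrow> norm v = 1"
    "\<And>v w. v \<in> B \<Longrightarrow> w \<in> B \<Longrightarrow> (transpose X *v v) \<bullet> (transpose X *v w) = (w \<bullet> (S *v w))^2 * (v \<bullet> w)"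
proof -
  define S where "S = psd_sqrt (X ** transpose X)"
  have pS: "psd_matrix S" and SS: "S ** S = X ** transpose X"
    using psd_sqrt_prop[OF psd_gram[of X]] unfolding S_def by auto
  obtain B where o: "onb S B" using spectral psd_sym[OF pS] by blast
  have nuc: "nuclear_norm X = (\<Sum>v\<in>B. v \<bullet> (S *v v))"
    unfolding nuclear_norm_def S_def[symmetric] by (rule onb_trace[OF o])
  have s0: "0 \<le> v \<bullet> (S *v v)" for v using psd_eig_nonneg[OF pS] .
  have n1: "norm v = 1" if "v \<in> B" for v using onb_on[OF o that that] by (simp add: norm_eq_1)
  have gram: "(transpose X *v v) \<bullet> (transpose X *v w) = (w \<bullet> (S *v w))^2 * (v \<bullet> w)"
    if v: "v \<in> B" and w: "w \<in> B" for v w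
  proof -
    have "(transpose X *v v) \<bullet> (transpose X *v w) = v \<bullet> (X *v (transpose X *v w))"
      by (simp only: inner_mv)
    also have "\<dots> = v \<bullet> (S *v (S *v w))" by (simp only: matrix_vector_mul_assoc SS)
    also have "\<dots> = (w \<bullet> (S *v w))^2 * (v \<bullet> w)"
    proof -
      define s where "s = w \<bullet> (S *v w)"
      have e: "S *v w = s *\<^sub>R w" unfolding s_def by (rule onb_eig[OF o w])
      have "S *v (S *v w) = (s * s) *\<^sub>R w" by (simp add: e matrix_vector_mult_scaleR)
      then show ?thesis unfolding s_def[symmetric] by (simp add: power2_eq_square)
    qed
    finally show ?thesis .
  qed
  have nX: "norm (transpose X *v v) = v \<bullet> (S *v v)" if v: "v \<in> B" for v
  proof -
    have "(transpose X *v v) \<bullet> (transpose X *v v) = (v \<bullet> (S *v v))^2"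
      using gram[OF v v] onb_on[OF o v v] by simp
    then show ?thesis using s0[of v] by (simp add: norm_eq_sqrt_inner)
  qed
  show ?thesis using that pS SS o nuc nX s0 n1 gram by blast
qed

lemma nuc_upper:
  fixes X Z :: "real^'c^'m"
  assumes c: "0 \<le> c" and Z: "\<And>v. norm (transpose Z *v v) \<le> c * norm v"
  shows "trace (transpose Z ** X) \<le> c * nuclear_norm X"
proof -
  obtain S B where b: "psd_matrix S" "S ** S = X ** transpose X" "onb S B"
    "nuclear_norm X = (\<Sum>v\<in>B. v \<bullet> (S *v v))"
    "\<And>v. v \<in> B \<Longrightarrow> norm (transpose X *v v) = v \<bullet> (S *v v)"
    "\<And>v. v \<in> B \<Longrightarrow> 0 \<le> v \<bullet> (S *v v)"
    "\<And>v. v \<in> B \<Longrightarrow> norm v = 1"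
    "\<And>v w. v \<in> B \<Longrightarrow> w \<in> B \<Longrightarrow> (transpose X *v v) \<bullet> (transpose X *v w) = (w \<bullet> (S *v w))^2 * (v \<bullet> w)"
    by (rule nuc_basis[of X]) blast+
  have "trace (transpose Z ** X) = trace (X ** transpose Z)" by (rule trace_mul_sym)
  also have "\<dots> = (\<Sum>v\<in>B. v \<bullet> ((X ** transpose Z) *v v))" by (rule onb_trace[OF b(3)])
  also have "\<dots> = (\<Sum>v\<in>B. (transpose X *v v) \<bullet> (transpose Z *v v))"
    by (simp only: matrix_vector_mul_assoc[symmetric] inner_mv)
  also have "\<dots> \<le> (\<Sum>v\<in>B. c * (v \<bullet> (S *v v)))"
  proof (rule sum_mono)
    fix v assume v: "v \<in> B"
    have "(transpose X *v v) \<bullet> (transpose Z *v v) \<le> norm (transpose X *v v) * norm (transpose Z *v v)"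
      by (rule norm_cauchy_schwarz)
    also have "\<dots> \<le> (v \<bullet> (S *v v)) * c"
      using Z[of v] b(5)[OF v] b(6)[OF v] b(7)[OF v] by (simp add: mult_left_mono)
    finally show "(transpose X *v v) \<bullet> (transpose Z *v v) \<le> c * (v \<bullet> (S *v v))" by (simp add: mult.commute)
  qed
  also have "\<dots> = c * nuclear_norm X" by (simp add: b(4) sum_distrib_left)
  finally show ?thesis .
qed


lemma nuc_attain:
  fixes X :: "real^'c^'m"
  shows "\<exists>W :: real^'c^'m. (\<forall>v. norm (transpose W *v v) \<le> norm v) \<and> trace (transpose W ** X) = nuclear_norm X"
proof -
  obtain S B where b: "psd_matrix S" "S ** S = X ** transpose X" "onb S B"
    "nuclear_norm X = (\<Sum>v\<in>B. v \<bullet> (S *v v))"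
    "\<And>v. v \<in> B \<Longrightarrow> norm (transpose X *v v) = v \<bullet> (S *v v)"
    "\<And>v. v \<in> B \<Longrightarrow> 0 \<le> v \<bullet> (S *v v)"
    "\<And>v. v \<in> B \<Longrightarrow> norm v = 1"
    "\<And>v w. v \<in> B \<Longrightarrow> w \<in> B \<Longrightarrow> (transpose X *v v) \<bullet> (transpose X *v w) = (w \<bullet> (S *v w))^2 * (v \<bullet> w)"
    by (rule nuc_basis[of X]) blast+
  note o = b(3)
  have fin: "finite B" by (rule onb_fin[OF o])
  define s where "s v = v \<bullet> (S *v v)" for v
  define B' where "B' = {v\<in>B. s v \<noteq> 0}"
  have B'B: "B' \<subseteq> B" unfolding B'_def by auto
  have fin': "finite B'" using fin B'B finite_subset by blast
  define g where "g v = (1 / s v) *\<^sub>R (transpose X *v v)" for v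
  define Wt where "Wt = osum B' g (\<lambda>v. v)"
  have Wty: "Wt *v y = (\<Sum>v\<in>B'. (v \<bullet> y) *\<^sub>R g v)" for y unfolding Wt_def by (rule osum_mult)
  have gg: "g v \<bullet> g w = (if v = w then 1 else 0)" if v: "v \<in> B'" and w: "w \<in> B'" for v w
  proof -
    have vB: "v \<in> B" and wB: "w \<in> B" and sv: "s v \<noteq> 0" and sw: "s w \<noteq> 0"
      using v w unfolding B'_def by auto
    have "g v \<bullet> g w = (1 / s v) * (1 / s w) * ((s w)^2 * (v \<bullet> w))"
      unfolding g_def using b(8)[OF vB wB] by (simp add: s_def)
    also have "\<dots> = (if v = w then 1 else 0)"
      using onb_on[OF o vB wB] sv sw by (simp add: power2_eq_square)
    finally show ?thesis .
  qed
  have nrm: "norm (Wt *v y) \<le> norm y" for y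
  proof -
    have "(Wt *v y) \<bullet> (Wt *v y) = (\<Sum>v\<in>B'. \<Sum>w\<in>B'. ((v \<bullet> y) * (w \<bullet> y)) * (g w \<bullet> g v))"
      unfolding Wty by (simp add: inner_sum_left inner_sum_right sum_distrib_left mult.assoc mult.left_commute)
    also have "\<dots> = (\<Sum>v\<in>B'. \<Sum>w\<in>B'. if w = v then (v \<bullet> y)^2 else 0)"
      by (intro sum.cong refl) (simp add: gg power2_eq_square)
    also have "\<dots> = (\<Sum>v\<in>B'. (v \<bullet> y)^2)" using fin' by simp
    also have "\<dots> \<le> (\<Sum>v\<in>B. (v \<bullet> y)^2)" using fin B'B by (intro sum_mono2) auto
    also have "\<dots> = y \<bullet> y" using onb_inner[OF o, of y y] by (simp add: power2_eq_square)
    finally have "(Wt *v y) \<bullet> (Wt *v y) \<le> y \<bullet> y" .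
    then show ?thesis by (simp add: norm_eq_sqrt_inner)
  qed
  have tr: "trace (Wt ** X) = nuclear_norm X"
  proof -
    have Wtw: "Wt *v w = (if w \<in> B' then g w else 0)" if w: "w \<in> B" for w
    proof -
      have "Wt *v w = (\<Sum>v\<in>B'. if v = w then g w else 0)"
        unfolding Wty
      proof (intro sum.cong refl)
        fix v assume "v \<in> B'"
        then have vB: "v \<in> B" using B'B by auto
        show "(v \<bullet> w) *\<^sub>R g v = (if v = w then g w else 0)"
          using onb_on[OF o vB w] by (cases "v = w") auto
      qed
      also have "\<dots> = (if w \<in> B' then g w else 0)" using fin' by simp
      finally show ?thesis .
    qed
    have "trace (Wt ** X) = trace (X ** Wt)" by (rule trace_mul_sym)
    also have "\<dots> = (\<Sum>w\<in>B. w \<bullet> ((X ** Wt) *v w))" by (rule onb_trace[OF o])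
    also have "\<dots> = (\<Sum>w\<in>B. (transpose X *v w) \<bullet> (Wt *v w))"
      by (simp only: matrix_vector_mul_assoc[symmetric] inner_mv)
    also have "\<dots> = (\<Sum>w\<in>B. s w)"
    proof (intro sum.cong refl)
      fix w assume w: "w \<in> B"
      show "(transpose X *v w) \<bullet> (Wt *v w) = s w"
      proof (cases "w \<in> B'")
        case True
        then have sw: "s w \<noteq> 0" unfolding B'_def by auto
        have "(transpose X *v w) \<bullet> (Wt *v w) = (1 / s w) * ((s w)^2 * (w \<bullet> w))"
          unfolding Wtw[OF w] using True b(8)[OF w w] by (simp add: g_def s_def)
        also have "\<dots> = s w" using onb_on[OF o w w] sw by (simp add: power2_eq_square)
        finally show ?thesis .
      next
        case False
        then have "s w = 0" using w unfolding B'_def by auto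
        then show ?thesis unfolding Wtw[OF w] using False by simp
      qed
    qed
    also have "\<dots> = nuclear_norm X" unfolding b(4) s_def ..
    finally show ?thesis .
  qed
  show ?thesis
    by (intro exI[of _ "transpose Wt"]) (simp add: nrm tr)
qed

lemma op_transpose:
  fixes M :: "real^'a^'b"
  assumes c: "0 \<le> c" and M: "\<And>v. norm (M *v v) \<le> c * norm v"
  shows "norm (transpose M *v v) \<le> c * norm v"
proof -
  let ?w = "transpose M *v v"
  have "?w \<bullet> ?w = v \<bullet> (M *v ?w)"
    using inner_mv[of v M ?w] by simp
  also have "\<dots> \<le> norm v * norm (M *v ?w)" by (rule norm_cauchy_schwarz)
  also have "\<dots> \<le> norm v * (c * norm ?w)" by (intro mult_left_mono M) simp
  finally have "norm ?w ^ 2 \<le> (c * norm v) * norm ?w"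
    by (simp add: power2_norm_eq_inner[symmetric] ac_simps)
  then show ?thesis
    by (cases "norm ?w = 0") (auto simp: power2_eq_square c intro: mult_nonneg_nonneg)
qed

lemma nuc_transpose_le:
  fixes X :: "real^'c^'m"
  shows "nuclear_norm (transpose X) \<le> nuclear_norm X"
proof -
  obtain W :: "real^'m^'c" where W: "\<forall>v. norm (transpose W *v v) \<le> norm v"
    "trace (transpose W ** transpose X) = nuclear_norm (transpose X)"
    using nuc_attain[of "transpose X"] by blast
  have W2: "norm (transpose (transpose W) *v v) \<le> 1 * norm v" for v
    using op_transpose[of 1 "transpose W" v] W(1) by simp
  have "nuclear_norm (transpose X) = trace (transpose W ** transpose X)" using W(2) by simp
  also have "\<dots> = trace (transpose (X ** W))" by (simp add: matrix_transpose_mul)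
  also have "\<dots> = trace (X ** W)" by (simp add: trace_def transpose_def)
  also have "\<dots> = trace (W ** X)" by (rule trace_mul_sym)
  also have "\<dots> = trace (transpose (transpose W) ** X)" by simp
  also have "\<dots> \<le> 1 * nuclear_norm X" by (rule nuc_upper[OF _ W2]) simp
  finally show ?thesis by simp
qed

lemma nuc_transpose: "nuclear_norm (transpose X) = nuclear_norm X"
  using nuc_transpose_le[of X] nuc_transpose_le[of "transpose X"] by simp

lemma nuc_uminus: "nuclear_norm (- X) = nuclear_norm X"
proof -
  have "(- X) ** transpose (- X) = X ** transpose X"
    by (simp add: vec_eq_iff matrix_matrix_mult_def transpose_def sum_negf)
  then show ?thesis unfolding nuclear_norm_def by simp
qed


lemma nuc_nonneg: "0 \<le> nuclear_norm (X :: real^'c^'m)"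
proof -
  obtain S B where b: "psd_matrix S" "S ** S = X ** transpose X" "onb S B"
    "nuclear_norm X = (\<Sum>v\<in>B. v \<bullet> (S *v v))"
    "\<And>v. v \<in> B \<Longrightarrow> norm (transpose X *v v) = v \<bullet> (S *v v)"
    "\<And>v. v \<in> B \<Longrightarrow> 0 \<le> v \<bullet> (S *v v)"
    "\<And>v. v \<in> B \<Longrightarrow> norm v = 1"
    "\<And>v w. v \<in> B \<Longrightarrow> w \<in> B \<Longrightarrow> (transpose X *v v) \<bullet> (transpose X *v w) = (w \<bullet> (S *v w))^2 * (v \<bullet> w)"
    by (rule nuc_basis[of X]) blast+
  show ?thesis unfolding b(4) by (intro sum_nonneg b(6))
qed

lemma half:
  fixes A :: "real^'r^'m" and SP SQ :: "real^'r^'r"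
  assumes d: "0 \<le> d" and D: "\<And>v. norm ((SQ - SP) *v v) \<le> d * norm v"
  shows "nuclear_norm (A ** SQ) \<le> nuclear_norm (A ** SP) + d * nuclear_norm A"
proof -
  obtain W :: "real^'r^'m" where W: "\<forall>v. norm (transpose W *v v) \<le> norm v"
    "trace (transpose W ** (A ** SQ)) = nuclear_norm (A ** SQ)"
    using nuc_attain[of "A ** SQ"] by blast
  define D where "D = SQ - SP"
  have "A ** SQ = A ** (SP + D)" unfolding D_def by simp
  also have "\<dots> = A ** SP + A ** D" by (rule matrix_add_ldistrib)
  finally have "A ** SQ = A ** SP + A ** D" .
  then have "nuclear_norm (A ** SQ) = trace (transpose W ** (A ** SP)) + trace (transpose W ** (A ** D))"
    using W(2) by (simp add: matrix_add_ldistrib trace_add)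
  also have "trace (transpose W ** (A ** SP)) \<le> 1 * nuclear_norm (A ** SP)"
    using W(1) by (intro nuc_upper) auto
  also have "trace (transpose W ** (A ** D)) \<le> d * nuclear_norm A"
  proof -
    have "trace (transpose W ** (A ** D)) = trace ((transpose W ** A) ** D)" by (simp add: matrix_mul_assoc)
    also have "\<dots> = trace (D ** (transpose W ** A))" by (rule trace_mul_sym)
    also have "\<dots> = trace (transpose (transpose (D ** transpose W)) ** A)" by (simp add: matrix_mul_assoc)
    also have "\<dots> \<le> d * nuclear_norm A"
    proof (rule nuc_upper[OF d])
      fix v
      have "norm ((D ** transpose W) *v v) = norm (D *v (transpose W *v v))" by (simp add: matrix_vector_mul_assoc)
      also have "\<dots> \<le> d * norm (transpose W *v v)" using D unfolding D_def by blast
      also have "\<dots> \<le> d * norm v" using W(1) d by (simp add: mult_left_mono)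
      finally show "norm (transpose (transpose (D ** transpose W)) *v v) \<le> d * norm v" by simp
    qed
    finally show ?thesis .
  qed
  finally show ?thesis by simp
qed

lemma eig_bound:
  fixes SP SQ :: "real^'r^'r"
  assumes pP: "psd_matrix SP" and pQ: "psd_matrix SQ" and u: "norm u = 1"
    and ev: "(SQ - SP) *v u = \<mu> *\<^sub>R u"
  shows "\<mu>^2 \<le> \<bar>u \<bullet> ((SQ ** SQ - SP ** SP) *v u)\<bar>"
proof -
  define a where "a = SP *v u"
  define b where "b = SQ *v u"
  have uu: "u \<bullet> u = 1" using u by (simp add: norm_eq_1)
  have ba: "b = a + \<mu> *\<^sub>R u" using ev unfolding a_def b_def by (simp add: matrix_vector_mult_diff_rdistrib algebra_simps)
  have ua: "0 \<le> u \<bullet> a" unfolding a_def by (rule psd_eig_nonneg[OF pP])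
  have ub: "0 \<le> u \<bullet> b" unfolding b_def by (rule psd_eig_nonneg[OF pQ])
  have val: "u \<bullet> ((SQ ** SQ - SP ** SP) *v u) = b \<bullet> b - a \<bullet> a"
  proof -
    have "u \<bullet> ((SQ ** SQ) *v u) = b \<bullet> b" unfolding b_def
      using inner_sym[OF psd_sym[OF pQ], of u "SQ *v u"] by (simp add: matrix_vector_mul_assoc[symmetric])
    moreover have "u \<bullet> ((SP ** SP) *v u) = a \<bullet> a" unfolding a_def
      using inner_sym[OF psd_sym[OF pP], of u "SP *v u"] by (simp add: matrix_vector_mul_assoc[symmetric])
    ultimately show ?thesis by (simp add: matrix_vector_mult_diff_rdistrib inner_diff_right)
  qed
  have v1: "b \<bullet> b - a \<bullet> a = 2 * \<mu> * (u \<bullet> a) + \<mu>^2"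
    unfolding ba using uu by (simp add: inner_add_left inner_add_right inner_commute power2_eq_square algebra_simps)
  have v2: "b \<bullet> b - a \<bullet> a = 2 * \<mu> * (u \<bullet> b) - \<mu>^2"
  proof -
    have ab: "a = b - \<mu> *\<^sub>R u" using ba by simp
    show ?thesis unfolding ab using uu by (simp add: inner_diff_left inner_diff_right inner_commute power2_eq_square algebra_simps)
  qed
  show ?thesis
  proof (cases "\<mu> \<ge> 0")
    case True
    then have "0 \<le> 2 * \<mu> * (u \<bullet> a)" using ua by simp
    then show ?thesis unfolding val v1 by simp
  next
    case False
    then have "2 * \<mu> * (u \<bullet> b) \<le> 0" using ub by (simp add: mult_nonpos_nonneg)
    then show ?thesis unfolding val v2 by simp
  qed
qed

lemma quad_nuc:
  fixes E :: "real^'r^'r"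
  assumes u: "norm u = 1"
  shows "\<bar>u \<bullet> (E *v u)\<bar> \<le> nuclear_norm E"
proof -
  define Zt where "Zt = osum {u} (\<lambda>v. v) (\<lambda>v. v)"
  have Zv: "Zt *v v = (u \<bullet> v) *\<^sub>R u" for v unfolding Zt_def osum_mult by simp
  have nZ: "norm (transpose (transpose Zt) *v v) \<le> 1 * norm v" for v
    unfolding transpose_transpose Zv using Cauchy_Schwarz_ineq2[of u v] u by simp
  have nZ': "norm (transpose (- transpose Zt) *v v) \<le> 1 * norm v" for v
  proof -
    have "transpose (- transpose Zt) *v v = - (Zt *v v)"
      by (simp add: vec_eq_iff transpose_def matrix_vector_mult_def sum_negf)
    then show ?thesis using nZ[of v] by simp
  qed
  have tr: "trace (Zt ** E) = u \<bullet> (E *v u)"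
  proof -
    have "trace (Zt ** E) = trace (E ** Zt)" by (rule trace_mul_sym)
    also have "\<dots> = u \<bullet> (E *v u)"
      unfolding Zt_def osum_def
      by (simp add: trace_def matrix_matrix_mult_def inner_vec_def matrix_vector_mult_def sum_distrib_left ac_simps)
    finally show ?thesis .
  qed
  have "trace (transpose (transpose Zt) ** E) \<le> 1 * nuclear_norm E" by (rule nuc_upper[OF _ nZ]) simp
  moreover have "trace (transpose (- transpose Zt) ** E) \<le> 1 * nuclear_norm E" by (rule nuc_upper[OF _ nZ']) simp
  moreover have "trace (transpose (- transpose Zt) ** E) = - trace (Zt ** E)"
    by (simp add: trace_def transpose_def matrix_matrix_mult_def sum_negf)
  ultimately show ?thesis using tr by simp
qed


lemma op_bound:
  fixes SP SQ :: "real^'r^'r"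
  assumes pP: "psd_matrix SP" and pQ: "psd_matrix SQ"
  shows "norm ((SQ - SP) *v v) \<le> sqrt (nuclear_norm (SQ ** SQ - SP ** SP)) * norm v"
proof -
  define D where "D = SQ - SP"
  define e where "e = nuclear_norm (SQ ** SQ - SP ** SP)"
  have Dsym: "transpose D = D" unfolding D_def using psd_sym[OF pP] psd_sym[OF pQ]
    by (simp add: vec_eq_iff transpose_def)
  obtain B where o: "onb D B" using spectral[OF Dsym] by blast
  define mu where "mu w = w \<bullet> (D *v w)" for w
  have mu_le: "(mu w)^2 \<le> e" if w: "w \<in> B" for w
  proof -
    have n1: "norm w = 1" using onb_on[OF o w w] by (simp add: norm_eq_1)
    have "(mu w)^2 \<le> \<bar>w \<bullet> ((SQ ** SQ - SP ** SP) *v w)\<bar>"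
      using eig_bound[OF pP pQ n1] onb_eig[OF o w] unfolding mu_def D_def by blast
    also have "\<dots> \<le> e" unfolding e_def by (rule quad_nuc[OF n1])
    finally show ?thesis .
  qed
  have "(D *v v) \<bullet> (D *v v) = (\<Sum>w\<in>B. (w \<bullet> (D *v v)) * (w \<bullet> (D *v v)))" by (rule onb_inner[OF o])
  also have "\<dots> = (\<Sum>w\<in>B. (mu w)^2 * (w \<bullet> v)^2)"
  proof (intro sum.cong refl)
    fix w assume w: "w \<in> B"
    have "w \<bullet> (D *v v) = (D *v w) \<bullet> v" by (rule inner_sym[OF Dsym])
    also have "\<dots> = mu w * (w \<bullet> v)" using onb_eig[OF o w] unfolding mu_def by (metis inner_scaleR_left)
    finally show "(w \<bullet> (D *v v)) * (w \<bullet> (D *v v)) = (mu w)^2 * (w \<bullet> v)^2" by (simp add: power2_eq_square)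
  qed
  also have "\<dots> \<le> (\<Sum>w\<in>B. e * (w \<bullet> v)^2)"
    using mu_le by (intro sum_mono mult_right_mono) auto
  also have "\<dots> = e * (v \<bullet> v)"
    using onb_inner[OF o, of v v] by (simp add: sum_distrib_left power2_eq_square)
  finally have le: "(D *v v) \<bullet> (D *v v) \<le> e * (v \<bullet> v)" .
  have "norm (D *v v) = sqrt ((D *v v) \<bullet> (D *v v))" by (rule norm_eq_sqrt_inner)
  also have "\<dots> \<le> sqrt (e * (v \<bullet> v))" using le by (rule real_sqrt_le_mono)
  also have "\<dots> = sqrt e * norm v" by (simp add: real_sqrt_mult norm_eq_sqrt_inner)
  finally show ?thesis unfolding D_def e_def .
qed

lemma frob_sq: "(frob_norm A)^2 = trace (A ** transpose A)"
proof -
  have "(frob_norm A)^2 = (\<Sum>i\<in>UNIV. \<Sum>j\<in>UNIV. (A $ i $ j)\<^sup>2)"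
    unfolding frob_norm_def by (simp add: sum_nonneg)
  also have "\<dots> = trace (A ** transpose A)"
    by (simp add: trace_def matrix_matrix_mult_def transpose_def power2_eq_square)
  finally show ?thesis .
qed

lemma main1:
  fixes A :: "real^'r^'m" and B :: "real^'r^'n"
  shows "\<bar>nuclear_norm (A ** transpose B) - (frob_norm A)\<^sup>2\<bar>
           \<le> sqrt (nuclear_norm (transpose A ** A - transpose B ** B)) * nuclear_norm A"
proof -
  define P where "P = transpose A ** A"
  define Q where "Q = transpose B ** B"
  have pP0: "psd_matrix P" unfolding P_def using psd_gram[of "transpose A"] by simp
  have pQ0: "psd_matrix Q" unfolding Q_def using psd_gram[of "transpose B"] by simp
  define SP where "SP = psd_sqrt P"
  define SQ where "SQ = psd_sqrt Q"
  have pP: "psd_matrix SP" and PP: "SP ** SP = P" using psd_sqrt_prop[OF pP0] unfolding SP_def by auto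
  have pQ: "psd_matrix SQ" and QQ: "SQ ** SQ = Q" using psd_sqrt_prop[OF pQ0] unfolding SQ_def by auto
  have e1: "nuclear_norm (A ** transpose B) = nuclear_norm (A ** SQ)"
  proof -
    have "(A ** transpose B) ** transpose (A ** transpose B) = A ** Q ** transpose A"
      unfolding Q_def by (simp add: matrix_transpose_mul matrix_mul_assoc)
    also have "\<dots> = (A ** SQ) ** transpose (A ** SQ)"
      unfolding QQ[symmetric] using psd_sym[OF pQ] by (simp add: matrix_transpose_mul matrix_mul_assoc)
    finally show ?thesis unfolding nuclear_norm_def by simp
  qed
  have e2: "(frob_norm A)^2 = nuclear_norm (A ** SP)"
  proof -
    have "(A ** SP) ** transpose (A ** SP) = A ** P ** transpose A"
      unfolding PP[symmetric] using psd_sym[OF pP] by (simp add: matrix_transpose_mul matrix_mul_assoc)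
    also have "\<dots> = (A ** transpose A) ** (A ** transpose A)"
      unfolding P_def by (simp add: matrix_mul_assoc)
    finally have "psd_sqrt ((A ** SP) ** transpose (A ** SP)) = A ** transpose A"
      using psd_sqrt_eq[OF psd_gram[of A]] by simp
    then show ?thesis unfolding nuclear_norm_def frob_sq by simp
  qed
  define d where "d = sqrt (nuclear_norm (transpose A ** A - transpose B ** B))"
  have d0: "0 \<le> d" unfolding d_def using nuc_nonneg by simp
  have ee: "nuclear_norm (SQ ** SQ - SP ** SP) = nuclear_norm (transpose A ** A - transpose B ** B)"
  proof -
    have "SQ ** SQ - SP ** SP = - (transpose A ** A - transpose B ** B)"
      unfolding PP QQ P_def Q_def by simp
    then show ?thesis by (metis nuc_uminus)
  qed
  have D1: "norm ((SQ - SP) *v v) \<le> d * norm v" for v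
    using op_bound[OF pP pQ, of v] unfolding ee d_def .
  have D2: "norm ((SP - SQ) *v v) \<le> d * norm v" for v
  proof -
    have "(SP - SQ) *v v = - ((SQ - SP) *v v)" by (simp add: matrix_vector_mult_diff_rdistrib)
    then show ?thesis using D1[of v] by simp
  qed
  have "nuclear_norm (A ** SQ) \<le> nuclear_norm (A ** SP) + d * nuclear_norm A" by (rule half[OF d0 D1])
  moreover have "nuclear_norm (A ** SP) \<le> nuclear_norm (A ** SQ) + d * nuclear_norm A" by (rule half[OF d0 D2])
  ultimately show ?thesis unfolding e1 e2 d_def[symmetric] by linarith
qed

theorem proposition3:
  fixes A :: "real^'r^'m" and B :: "real^'r^'n"
  assumes "CARD('r) \<le> CARD('m)" and "CARD('r) \<le> CARD('n)"
  shows "\<bar>nuclear_norm (A ** transpose B) - (frob_norm A)\<^sup>2\<bar>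
           \<le> sqrt (nuclear_norm (transpose A ** A - transpose B ** B)) * nuclear_norm A
       \<and> \<bar>nuclear_norm (A ** transpose B) - ((frob_norm A)\<^sup>2 + (frob_norm B)\<^sup>2) / 2\<bar>
           \<le> sqrt (nuclear_norm (transpose A ** A - transpose B ** B))
               * ((nuclear_norm A + nuclear_norm B) / 2)"
proof -
  define s where "s = sqrt (nuclear_norm (transpose A ** A - transpose B ** B))"
  have 1: "\<bar>nuclear_norm (A ** transpose B) - (frob_norm A)\<^sup>2\<bar> \<le> s * nuclear_norm A"
    unfolding s_def by (rule main1)
  have "\<bar>nuclear_norm (B ** transpose A) - (frob_norm B)\<^sup>2\<bar>
           \<le> sqrt (nuclear_norm (transpose B ** B - transpose A ** A)) * nuclear_norm B"
    by (rule main1)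
  moreover have "nuclear_norm (B ** transpose A) = nuclear_norm (A ** transpose B)"
    using nuc_transpose[of "A ** transpose B"] by (simp add: matrix_transpose_mul)
  moreover have "nuclear_norm (transpose B ** B - transpose A ** A) = nuclear_norm (transpose A ** A - transpose B ** B)"
    using nuc_uminus[of "transpose A ** A - transpose B ** B"] by simp
  ultimately have 2: "\<bar>nuclear_norm (A ** transpose B) - (frob_norm B)\<^sup>2\<bar> \<le> s * nuclear_norm B"
    unfolding s_def by simp
  have "\<bar>nuclear_norm (A ** transpose B) - ((frob_norm A)\<^sup>2 + (frob_norm B)\<^sup>2) / 2\<bar>
      \<le> (\<bar>nuclear_norm (A ** transpose B) - (frob_norm A)\<^sup>2\<bar> + \<bar>nuclear_norm (A ** transpose B) - (frob_norm B)\<^sup>2\<bar>) / 2"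
  proof -
    have "\<bar>x - (a + b) / 2\<bar> \<le> (\<bar>x - a\<bar> + \<bar>x - b\<bar>) / 2" for x a b :: real
    proof -
      have e: "x - (a + b) / 2 = ((x - a) + (x - b)) / 2" by (simp add: field_simps)
      have h: "\<bar>(p + q) / 2\<bar> \<le> (\<bar>p\<bar> + \<bar>q\<bar>) / 2" for p q :: real
        using abs_triangle_ineq[of p q] by (simp add: abs_divide)
      show ?thesis by (metis e h)
    qed
    then show ?thesis .
  qed
  also have "\<dots> \<le> (s * nuclear_norm A + s * nuclear_norm B) / 2" using 1 2 by (intro divide_right_mono add_mono) simp_all
  also have "\<dots> = s * ((nuclear_norm A + nuclear_norm B) / 2)" by (simp add: algebra_simps)
  finally show ?thesis using 1 unfolding s_def by simp
qed

end
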